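(* Let $z_1,\dots,z_5$ be nonzero complex numbers with $|z_1|\ge|z_2|\ge\cdots\ge|z_5|$ and $z_i^{-1}=z_{6-i}$ for $1\le i\le 5$. Then $$\sum_{i=1}^5|z_i|\le 2\Big|\sum_{i=1}^5 z_i^2\Big|^{1/2}+2\Big|\sum_{i=1}^5 z_i\Big|+15.$$ *)

theory Defs
  imports "HOL-Analysis.Analysis"
begin

end

theory Submission
  imports Defs
begin

lemma sq1: "(x::real)*x = 1 \<Longrightarrow> 0 \<le> x \<Longrightarrow> x = 1"
proof -
  assume a: "x*x = 1" "0 \<le> x"
  have "(x-1)*(x+1) = 0" using a by (simp add: algebra_simps)
  thus "x = 1" using a(2) by simp
qed

lemma key:
  fixes p q :: complex
  assumes "norm q \<le> norm p"
  shows "norm p + norm q \<le> 2 * norm (p + q) + sqrt 2 * sqrt (norm (p^2 + q^2))"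
proof -
  have "norm (2*p) \<le> norm (p+q) + norm (p-q)"
    using norm_triangle_ineq[of "p+q" "p-q"] by (simp add: algebra_simps)
  hence h1: "2 * norm p \<le> norm (p+q) + norm (p-q)" by (simp add: norm_mult)
  have "(p-q)^2 = 2*(p^2+q^2) - (p+q)^2" by (simp add: power2_eq_square algebra_simps)
  hence "norm ((p-q)^2) \<le> norm (2*(p^2+q^2)) + norm ((p+q)^2)"
    by (metis norm_triangle_ineq4)
  moreover have "norm (2*(p^2+q^2)) = 2 * norm (p^2+q^2)" by (simp only: norm_mult) simp
  ultimately have h2: "(norm (p-q))^2 \<le> 2 * norm (p^2+q^2) + (norm (p+q))^2"
    by (simp only: norm_power)
  have "norm (p-q) = sqrt ((norm (p-q))^2)" by simp
  also have "\<dots> \<le> sqrt (2 * norm (p^2+q^2) + (norm (p+q))^2)"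
    using h2 real_sqrt_le_mono by blast
  also have "\<dots> \<le> sqrt (2 * norm (p^2+q^2)) + sqrt ((norm (p+q))^2)"
    by (rule sqrt_add_le_add_sqrt) auto
  also have "\<dots> = sqrt 2 * sqrt (norm (p^2+q^2)) + norm (p+q)"
    by (simp add: real_sqrt_mult)
  finally show ?thesis using h1 assms by linarith
qed

theorem lemma3p8:
  fixes z :: "nat \<Rightarrow> complex"
  assumes nz: "\<And>i. i \<in> {1..5} \<Longrightarrow> z i \<noteq> 0"
    and ord: "\<And>i. i \<in> {1..4} \<Longrightarrow> norm (z (Suc i)) \<le> norm (z i)"
    and inv: "\<And>i. i \<in> {1..5} \<Longrightarrow> inverse (z i) = z (6 - i)"
  shows "(\<Sum>i=1..5. norm (z i))
           \<le> 2 * sqrt (norm (\<Sum>i=1..5. (z i)^2)) + 2 * norm (\<Sum>i=1..5. z i) + 15"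
proof -
  have e: "{1..5::nat} = {1,2,3,4,5}" by auto
  have i3: "inverse (z 3) = z 3" using inv[of 3] by simp
  have "norm (z 3) * norm (z 3) = 1"
  proof -
    have n0: "z 3 \<noteq> 0" using nz[of 3] by simp
    have "z 3 * inverse (z 3) = 1" using n0 by simp
    hence "z 3 * z 3 = 1" using i3 by simp
    hence "norm (z 3 * z 3) = 1" by simp
    thus ?thesis by (simp only: norm_mult)
  qed
  hence n3: "norm (z 3) = 1"
    using sq1[of "norm (z 3)"] by simp
  have o1: "norm (z 2) \<le> norm (z 1)" using ord[of 1] by (simp add: numeral_2_eq_2)
  have o3: "norm (z 4) \<le> norm (z 3)" using ord[of 3] by simp
  have o4: "norm (z 5) \<le> norm (z 4)" using ord[of 4] by simp
  define r where "r = z 3 + z 4 + z 5"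
  define s where "s = (z 3)^2 + (z 4)^2 + (z 5)^2"
  have nr: "norm r \<le> 3" unfolding r_def
    using norm_triangle_ineq[of "z 3 + z 4" "z 5"] norm_triangle_ineq[of "z 3" "z 4"] n3 o3 o4 by linarith
  have a4: "norm ((z 4)^2) \<le> 1" using o3 n3 by (simp add: norm_power power_le_one)
  have a5: "norm ((z 5)^2) \<le> 1" using o3 o4 n3 by (simp add: norm_power power_le_one)
  have ns: "norm s \<le> 3" unfolding s_def
    using norm_triangle_ineq[of "(z 3)^2 + (z 4)^2" "(z 5)^2"] norm_triangle_ineq[of "(z 3)^2" "(z 4)^2"] n3 a4 a5
    by (simp add: norm_power)
  have S1: "(\<Sum>i=1..5. z i) = (z 1 + z 2) + r" unfolding e r_def by (simp add: algebra_simps)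
  have S2: "(\<Sum>i=1..5. (z i)^2) = ((z 1)^2 + (z 2)^2) + s" unfolding e s_def by (simp add: algebra_simps)
  have SN: "(\<Sum>i=1..5. norm (z i)) = norm (z 1) + norm (z 2) + norm (z 3) + norm (z 4) + norm (z 5)"
    unfolding e by simp
  define P where "P = norm (z 1 + z 2)"
  define Q where "Q = norm ((z 1)^2 + (z 2)^2)"
  have K: "norm (z 1) + norm (z 2) \<le> 2 * P + sqrt 2 * sqrt Q" unfolding P_def Q_def using key o1 by blast
  have P1: "P \<le> norm (\<Sum>i=1..5. z i) + 3" unfolding S1 P_def
    using norm_triangle_ineq4[of "z 1 + z 2 + r" r] nr by simp
  have Q1: "Q \<le> norm (\<Sum>i=1..5. (z i)^2) + 3" unfolding S2 Q_def
    using norm_triangle_ineq4[of "(z 1)^2 + (z 2)^2 + s" s] ns by simp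
  define T where "T = norm (\<Sum>i=1..5. (z i)^2)"
  have "sqrt Q \<le> sqrt (T + 3)" using Q1 T_def by simp
  also have "\<dots> \<le> sqrt T + sqrt 3" by (rule sqrt_add_le_add_sqrt) (auto simp: T_def)
  finally have sQ: "sqrt Q \<le> sqrt T + sqrt 3" .
  have s2: "sqrt 2 \<le> 2"
  proof -
    have "sqrt 2 \<le> sqrt 4" by (rule real_sqrt_le_mono) simp
    also have "sqrt 4 = (2::real)" using real_sqrt_unique[of 2 4] by simp
    finally show ?thesis .
  qed
  have s6: "sqrt 2 * sqrt 3 \<le> 3"
  proof -
    have "sqrt 2 * sqrt 3 = sqrt 6" by (simp add: real_sqrt_mult[symmetric])
    also have "\<dots> \<le> sqrt 9" by (rule real_sqrt_le_mono) simp
    also have "sqrt 9 = (3::real)" using real_sqrt_unique[of 3 9] by simp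
    finally show ?thesis .
  qed
  have "sqrt 2 * sqrt Q \<le> sqrt 2 * sqrt T + sqrt 2 * sqrt 3"
    using sQ by (simp add: distrib_left[symmetric])
  moreover have "sqrt 2 * sqrt T \<le> 2 * sqrt T" using s2 by (simp add: T_def mult_right_mono)
  ultimately have "sqrt 2 * sqrt Q \<le> 2 * sqrt T + 3" using s6 by linarith
  thus ?thesis using K P1 SN n3 o3 o4 unfolding T_def by linarith
qed

end
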